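(* For any group $\Gamma$ we have $\displaystyle r(\Gamma)=-\inf_S\frac{\ln\rho(\Gamma,S)}{\ln|S|}$, where the infimum runs over all finite symmetric subsets $S\subseteq\Gamma$ with $|S|\ge 2$.
   Context: For finite symmetric $S\subseteq\Gamma$, $\rho(\Gamma,S)$ is the operator norm on $\ell^2(\Gamma)$ of the Markov operator $M_S=\frac1{|S|}\mathbf{1}_S$ acting by left convolution. $r(\Gamma)=-\liminf_S\frac{\ln\rho(\Gamma,S)}{\ln|S|}$, the liminf over the directed set of finite symmetric subsets ordered by inclusion ($\liminf_Sf(S)=\sup_S\inf_{S'\supseteq S}f(S')$). *)

theory Defs
  imports "HOL-Analysis.Analysis"
begin

text \<open>The group \<Gamma> is a type of class group_add (written additively; not
  assumed commutative). Functions in l2(\<Gamma>) are complex valued.\<close>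

definition finite_symmetric :: "'a::group_add set \<Rightarrow> bool" where
  "finite_symmetric S \<longleftrightarrow> finite S \<and> uminus ` S = S"

definition in_l2 :: "('a \<Rightarrow> complex) \<Rightarrow> bool" where
  "in_l2 f \<longleftrightarrow> (\<lambda>x. (cmod (f x))\<^sup>2) summable_on UNIV"

definition l2_norm :: "('a \<Rightarrow> complex) \<Rightarrow> real" where
  "l2_norm f = sqrt (\<Sum>\<^sub>\<infinity>x\<in>UNIV. (cmod (f x))\<^sup>2)"

text \<open>Markov operator M_S = (1/|S|) 1_S acting by left convolution:
  (1_S * f)(x) = sum over s in S of f(s^{-1} x).\<close>
definition markov_op :: "'a::group_add set \<Rightarrow> ('a \<Rightarrow> complex) \<Rightarrow> ('a \<Rightarrow> complex)" where
  "markov_op S f = (\<lambda>x. (1 / of_nat (card S)) * (\<Sum>s\<in>S. f ((- s) + x)))"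

definition spec_rho :: "'a::group_add set \<Rightarrow> real" where
  "spec_rho S = Sup {l2_norm (markov_op S f) | f. in_l2 f \<and> l2_norm f \<le> 1}"

definition rho_exponent_fun :: "'a::group_add set \<Rightarrow> real" where
  "rho_exponent_fun S = ln (spec_rho S) / ln (real (card S))"

text \<open>r(\<Gamma>) = - liminf_S ln rho(\<Gamma>,S) / ln |S|, liminf over the directed set of
  finite symmetric subsets ordered by inclusion: liminf_S f(S) = sup_S inf_{S' \<supseteq> S} f(S').\<close>
definition r_Gamma :: "'a::group_add itself \<Rightarrow> real" where
  "r_Gamma _ = - (SUP S \<in> {S::'a set. finite_symmetric S}.
                    INF S' \<in> {S'. finite_symmetric S' \<and> S \<subseteq> S'}. rho_exponent_fun S')"

end

theory Submission
  imports Defs "HOL-Real_Asymp.Real_Asymp"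
begin

lemma l2_fin_le:
  assumes "in_l2 f" "finite F"
  shows "L2_set (\<lambda>x. cmod (f x)) F \<le> l2_norm f"
proof -
  have "(\<Sum>x\<in>F. (cmod (f x))\<^sup>2) \<le> (\<Sum>\<^sub>\<infinity>x\<in>UNIV. (cmod (f x))\<^sup>2)"
    using assms by (intro finite_sum_le_infsum) (auto simp: in_l2_def)
  then show ?thesis unfolding L2_set_def l2_norm_def by simp
qed

lemma l2_from_fin:
  assumes "\<And>F. finite F \<Longrightarrow> L2_set (\<lambda>x. cmod (h x)) F \<le> B"
  shows "in_l2 h \<and> l2_norm h \<le> B"
proof -
  have B0: "0 \<le> B" using assms[of "{}"] by simp
  have fs: "(\<Sum>x\<in>F. (cmod (h x))\<^sup>2) \<le> B\<^sup>2" if "finite F" for F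
  proof -
    have "sqrt (\<Sum>x\<in>F. (cmod (h x))\<^sup>2) \<le> B" using assms[OF that] by (simp add: L2_set_def)
    then show ?thesis using B0 by (metis real_le_rsqrt sqrt_le_D)
  qed
  have sm: "in_l2 h" unfolding in_l2_def
    by (rule nonneg_bdd_above_summable_on) (auto intro!: bdd_aboveI[where M="B\<^sup>2"] fs)
  have "(\<Sum>\<^sub>\<infinity>x\<in>UNIV. (cmod (h x))\<^sup>2) \<le> B\<^sup>2"
    using sm by (intro infsum_le_finite_sums) (auto simp: in_l2_def fs)
  then have "l2_norm h \<le> sqrt (B\<^sup>2)" unfolding l2_norm_def using real_sqrt_le_mono by blast
  with B0 show ?thesis using sm by simp
qed

lemma L2_set_sum_le:
  assumes "finite I"
  shows "L2_set (\<lambda>x. \<Sum>i\<in>I. g i x) F \<le> (\<Sum>i\<in>I. L2_set (g i) F)"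
  using assms
proof (induction I rule: finite_induct)
  case empty
  then show ?case by (simp add: L2_set_def)
next
  case (insert a I)
  have "L2_set (\<lambda>x. \<Sum>i\<in>insert a I. g i x) F = L2_set (\<lambda>x. g a x + (\<Sum>i\<in>I. g i x)) F"
    using insert by simp
  also have "\<dots> \<le> L2_set (g a) F + L2_set (\<lambda>x. \<Sum>i\<in>I. g i x) F"
    by (rule L2_set_triangle_ineq)
  also have "\<dots> \<le> L2_set (g a) F + (\<Sum>i\<in>I. L2_set (g i) F)" using insert by simp
  finally show ?case using insert by simp
qed

lemma l2_family:
  fixes I :: "'i set" and H :: "'a \<Rightarrow> complex" and G :: "'i \<Rightarrow> 'a \<Rightarrow> complex"
  assumes "finite I" "\<And>i. i \<in> I \<Longrightarrow> in_l2 (G i)" "\<And>i. i \<in> I \<Longrightarrow> 0 \<le> c i"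
    and "\<And>x. cmod (H x) \<le> (\<Sum>i\<in>I. c i * cmod (G i x))"
  shows "in_l2 H \<and> l2_norm H \<le> (\<Sum>i\<in>I. c i * l2_norm (G i))"
proof (rule l2_from_fin)
  fix F :: "'a set" assume F: "finite F"
  have "L2_set (\<lambda>x. cmod (H x)) F \<le> L2_set (\<lambda>x. \<Sum>i\<in>I. c i * cmod (G i x)) F"
    by (rule L2_set_mono) (use assms(4) in auto)
  also have "\<dots> \<le> (\<Sum>i\<in>I. L2_set (\<lambda>x. c i * cmod (G i x)) F)"
    by (rule L2_set_sum_le[OF assms(1)])
  also have "\<dots> = (\<Sum>i\<in>I. c i * L2_set (\<lambda>x. cmod (G i x)) F)"
    by (rule sum.cong) (use assms(3) L2_set_right_distrib in metis)+
  also have "\<dots> \<le> (\<Sum>i\<in>I. c i * l2_norm (G i))"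
    by (rule sum_mono) (use assms(2,3) l2_fin_le F in \<open>blast intro: mult_left_mono\<close>)
  finally show "L2_set (\<lambda>x. cmod (H x)) F \<le> (\<Sum>i\<in>I. c i * l2_norm (G i))" .
qed

lemma l2_dom:
  assumes "in_l2 G" "0 \<le> c" "\<And>x. cmod (H x) \<le> c * cmod (G x)"
  shows "in_l2 H \<and> l2_norm H \<le> c * l2_norm G"
  using l2_family[of "{()}" "\<lambda>_. G" "\<lambda>_. c" H] assms by auto

lemma l2_translate:
  fixes f :: "'a::group_add \<Rightarrow> complex"
  assumes "in_l2 f"
  shows "in_l2 (\<lambda>x. f (v + x)) \<and> l2_norm (\<lambda>x. f (v + x)) \<le> l2_norm f"
proof (rule l2_from_fin)
  fix F :: "'a set" assume F: "finite F"
  have inj: "inj_on (\<lambda>x. v + x) F" by (auto simp: inj_on_def)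
  have "L2_set (\<lambda>x. cmod (f (v + x))) F = L2_set (\<lambda>x. cmod (f x)) ((\<lambda>x. v + x) ` F)"
    unfolding L2_set_def by (simp add: sum.reindex[OF inj])
  also have "\<dots> \<le> l2_norm f" using l2_fin_le[OF assms] F by simp
  finally show "L2_set (\<lambda>x. cmod (f (v + x))) F \<le> l2_norm f" .
qed

lemma in_l2_zero [simp]: "in_l2 (\<lambda>x. 0)"
  by (simp add: in_l2_def)
lemma l2_norm_zero [simp]: "l2_norm (\<lambda>x. 0) = 0"
  by (simp add: l2_norm_def)

lemma l2_norm_nonneg: "0 \<le> l2_norm f"
  by (simp add: l2_norm_def infsum_nonneg)

lemma l2_cmod:
  assumes "in_l2 f"
  shows "in_l2 (\<lambda>x. complex_of_real (cmod (f x))) \<and> l2_norm (\<lambda>x. complex_of_real (cmod (f x))) \<le> l2_norm f"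
  using l2_dom[OF assms, of 1] by simp

definition opn :: "(('a \<Rightarrow> complex) \<Rightarrow> ('a \<Rightarrow> complex)) \<Rightarrow> real" where
  "opn A = Sup {l2_norm (A f) | f. in_l2 f \<and> l2_norm f \<le> 1}"

definition bnd :: "(('a \<Rightarrow> complex) \<Rightarrow> ('a \<Rightarrow> complex)) \<Rightarrow> real \<Rightarrow> bool" where
  "bnd A c \<longleftrightarrow> (\<forall>f. in_l2 f \<longrightarrow> in_l2 (A f) \<and> l2_norm (A f) \<le> c * l2_norm f)"

definition hom :: "(('a \<Rightarrow> complex) \<Rightarrow> ('a \<Rightarrow> complex)) \<Rightarrow> bool" where
  "hom A \<longleftrightarrow> (\<forall>r f. A (\<lambda>x. complex_of_real r * f x) = (\<lambda>x. complex_of_real r * A f x))"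

lemma bnd_D: "bnd A c \<Longrightarrow> in_l2 f \<Longrightarrow> in_l2 (A f) \<and> l2_norm (A f) \<le> c * l2_norm f"
  by (simp add: bnd_def)

lemma opn_set_bdd:
  assumes "bnd A c"
  shows "bdd_above {l2_norm (A f) | f. in_l2 f \<and> l2_norm f \<le> 1}"
proof (rule bdd_aboveI[where M="\<bar>c\<bar>"])
  fix y assume "y \<in> {l2_norm (A f) | f. in_l2 f \<and> l2_norm f \<le> 1}"
  then obtain f where f: "in_l2 f" "l2_norm f \<le> 1" "y = l2_norm (A f)" by blast
  have "y \<le> c * l2_norm f" using bnd_D[OF assms f(1)] f(3) by simp
  also have "\<dots> \<le> \<bar>c\<bar> * l2_norm f" by (simp add: l2_norm_nonneg mult_right_mono)
  also have "\<dots> \<le> \<bar>c\<bar>" using f(2) by (simp add: mult_left_le)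
  finally show "y \<le> \<bar>c\<bar>" .
qed

lemma opn_ge:
  assumes "bnd A c" "in_l2 f" "l2_norm f \<le> 1"
  shows "l2_norm (A f) \<le> opn A"
  unfolding opn_def by (rule cSup_upper) (use assms opn_set_bdd in auto)

lemma opn_nonneg:
  fixes A :: "('a \<Rightarrow> complex) \<Rightarrow> ('a \<Rightarrow> complex)"
  shows "bnd A c \<Longrightarrow> 0 \<le> opn A"
proof -
  assume b: "bnd A c"
  have z: "in_l2 (\<lambda>x::'a. 0::complex)" "l2_norm (\<lambda>x::'a. 0::complex) \<le> 1" by auto
  have "l2_norm (A (\<lambda>x. 0)) \<le> opn A" using opn_ge[OF b z] .
  then show ?thesis using l2_norm_nonneg[of "A (\<lambda>x. 0)"] by linarith
qed

lemma bnd_opn_le: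
  fixes A :: "('a \<Rightarrow> complex) \<Rightarrow> ('a \<Rightarrow> complex)"
  assumes "bnd A c" "0 \<le> c"
  shows "opn A \<le> c"
  unfolding opn_def
proof (rule cSup_least)
  have "l2_norm (A (\<lambda>x. 0)) \<in> {l2_norm (A f) | f. in_l2 f \<and> l2_norm f \<le> 1}" by force
  then show "{l2_norm (A f) | f. in_l2 f \<and> l2_norm f \<le> 1} \<noteq> {}" by blast
next
  fix y assume "y \<in> {l2_norm (A f) | f. in_l2 f \<and> l2_norm f \<le> 1}"
  then obtain f where f: "in_l2 f" "l2_norm f \<le> 1" "y = l2_norm (A f)" by blast
  have "y \<le> c * l2_norm f" using bnd_D[OF assms(1) f(1)] f(3) by simp
  also have "\<dots> \<le> c" using f(2) assms(2) by (simp add: mult_left_le)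
  finally show "y \<le> c" .
qed

lemma bnd_opn:
  fixes A :: "('a \<Rightarrow> complex) \<Rightarrow> ('a \<Rightarrow> complex)"
  assumes h: "hom A" and b: "bnd A c"
  shows "bnd A (opn A)"
  unfolding bnd_def
proof (intro allI impI conjI)
  fix f :: "'a \<Rightarrow> complex" assume f: "in_l2 f"
  show "in_l2 (A f)" using bnd_D[OF b f] by simp
  define r where "r = l2_norm f"
  define Op where "Op = opn A"
  have r0: "0 \<le> r" by (simp add: r_def l2_norm_nonneg)
  have Op0: "0 \<le> Op" using opn_nonneg[OF b] by (simp add: Op_def)
  have key: "l2_norm (A f) \<le> (r + d) * Op" if d: "0 < d" for d
  proof -
    define g where "g = (\<lambda>x. complex_of_real (1 / (r + d)) * f x)"
    have g: "in_l2 g \<and> l2_norm g \<le> 1 / (r + d) * l2_norm f"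
      unfolding g_def
    proof (rule l2_dom[OF f])
      show "0 \<le> 1 / (r + d)" using r0 d by simp
      fix x
      have "cmod (complex_of_real (1 / (r + d)) * f x) = \<bar>1 / (r + d)\<bar> * cmod (f x)"
        by (simp only: norm_mult norm_of_real)
      then show "cmod (complex_of_real (1 / (r + d)) * f x) \<le> 1 / (r + d) * cmod (f x)"
        using r0 d by simp
    qed
    have "1 / (r + d) * l2_norm f \<le> 1" using r0 d by (simp add: r_def field_simps)
    then have Ag: "l2_norm (A g) \<le> Op" unfolding Op_def using g opn_ge[OF b] by auto
    have rd: "complex_of_real (r + d) * complex_of_real (1 / (r + d)) = 1"
    proof -
      have "r + d \<noteq> 0" using r0 d by simp
      then have "(r + d) * (1 / (r + d)) = 1" by simp
      then show ?thesis by (metis of_real_1 of_real_mult)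
    qed
    have fg: "f = (\<lambda>x. complex_of_real (r + d) * g x)"
      unfolding g_def by (simp add: mult.assoc[symmetric] rd del: of_real_add of_real_divide)
    have Af: "A f = (\<lambda>x. complex_of_real (r + d) * A g x)"
      by (subst fg) (use h in \<open>simp only: hom_def\<close>)
    moreover have "in_l2 (A g)" using bnd_D[OF b] g by blast
    moreover have cm: "cmod (complex_of_real (r + d)) = r + d" using r0 d by (simp only: norm_of_real)
    ultimately have "l2_norm (A f) \<le> (r + d) * l2_norm (A g)"
      using l2_dom[of "A g" "r + d" "A f"] r0 d by (simp add: norm_mult del: of_real_add)
    also have "\<dots> \<le> (r + d) * Op" using Ag r0 d by (simp add: mult_left_mono)
    finally show ?thesis .
  qed
  have "l2_norm (A f) \<le> r * Op + e" if e: "0 < e" for e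
  proof -
    have "l2_norm (A f) \<le> (r + e / (Op + 1)) * Op" using key[of "e / (Op+1)"] e Op0 by simp
    also have "\<dots> = r * Op + e * (Op / (Op + 1))" using Op0 by (simp add: field_simps)
    also have "\<dots> \<le> r * Op + e * 1"
    proof -
      have "Op / (Op + 1) \<le> 1" using Op0 by simp
      then show ?thesis using e by (intro add_left_mono mult_left_mono) auto
    qed
    finally show ?thesis by simp
  qed
  then have "l2_norm (A f) \<le> r * Op" by (rule field_le_epsilon)
  then show "l2_norm (A f) \<le> opn A * l2_norm f"
    by (simp add: Op_def r_def mult.commute)
qed

lemma bnd_comp:
  fixes A :: "('a \<Rightarrow> complex) \<Rightarrow> ('a \<Rightarrow> complex)"
  assumes "bnd A c" "bnd B d" "0 \<le> c"
  shows "bnd (A \<circ> B) (c * d)"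
  unfolding bnd_def
proof (intro allI impI conjI)
  fix f :: "'a \<Rightarrow> complex" assume f: "in_l2 f"
  have B: "in_l2 (B f)" "l2_norm (B f) \<le> d * l2_norm f" using bnd_D[OF assms(2) f] by auto
  show "in_l2 ((A \<circ> B) f)" using bnd_D[OF assms(1) B(1)] by simp
  have "l2_norm ((A \<circ> B) f) \<le> c * l2_norm (B f)" using bnd_D[OF assms(1) B(1)] by simp
  also have "\<dots> \<le> c * (d * l2_norm f)" by (rule mult_left_mono[OF B(2) assms(3)])
  finally show "l2_norm ((A \<circ> B) f) \<le> c * d * l2_norm f" by simp
qed

lemma bnd_id: "bnd (\<lambda>f. f) 1"
  by (simp add: bnd_def)

lemma hom_markov: "hom (markov_op S)"
  unfolding hom_def markov_op_def by (auto simp: sum_distrib_left mult_ac)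

lemma bnd_markov1:
  fixes S :: "'a::group_add set"
  assumes "finite S" "S \<noteq> {}"
  shows "bnd (markov_op S) 1"
  unfolding bnd_def
proof (intro allI impI)
  fix f :: "'a \<Rightarrow> complex" assume f: "in_l2 f"
  define m where "m = real (card S)"
  have m0: "0 < m" using assms by (simp add: m_def card_gt_0_iff)
  have fam: "in_l2 (markov_op S f) \<and> l2_norm (markov_op S f) \<le> (\<Sum>s\<in>S. (1/m) * l2_norm (\<lambda>x. f (- s + x)))"
  proof (rule l2_family[OF assms(1)])
    show "in_l2 (\<lambda>x. f (- s + x))" for s using l2_translate[OF f] by blast
    show "0 \<le> 1/m" for s :: 'a using m0 by simp
    fix x
    have "cmod (markov_op S f x) = (1/m) * cmod (\<Sum>s\<in>S. f (- s + x))"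
      unfolding markov_op_def m_def by (simp add: norm_mult norm_divide)
    also have "\<dots> \<le> (1/m) * (\<Sum>s\<in>S. cmod (f (- s + x)))"
      using m0 by (intro mult_left_mono norm_sum) auto
    finally show "cmod (markov_op S f x) \<le> (\<Sum>s\<in>S. 1/m * cmod (f (- s + x)))"
      by (simp add: sum_distrib_left)
  qed
  have "(\<Sum>s\<in>S. (1/m) * l2_norm (\<lambda>x. f (- s + x))) \<le> (\<Sum>s\<in>S. (1/m) * l2_norm f)"
    using m0 l2_translate[OF f] by (intro sum_mono mult_left_mono) auto
  also have "\<dots> = l2_norm f" using m0 by (simp add: m_def)
  finally show "in_l2 (markov_op S f) \<and> l2_norm (markov_op S f) \<le> 1 * l2_norm f"
    using fam by simp
qed

lemma spec_rho_opn: "spec_rho S = opn (markov_op S)"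
  by (simp add: spec_rho_def opn_def)

lemma bnd_markov:
  fixes S :: "'a::group_add set"
  assumes "finite S" "S \<noteq> {}"
  shows "bnd (markov_op S) (spec_rho S)"
  unfolding spec_rho_opn by (rule bnd_opn[OF hom_markov bnd_markov1[OF assms]])

lemma spec_rho_le1:
  fixes S :: "'a::group_add set"
  assumes "finite S" "S \<noteq> {}"
  shows "spec_rho S \<le> 1"
  unfolding spec_rho_opn by (rule bnd_opn_le[OF bnd_markov1[OF assms]]) simp

lemma spec_rho_nonneg:
  fixes S :: "'a::group_add set"
  assumes "finite S" "S \<noteq> {}"
  shows "0 \<le> spec_rho S"
  unfolding spec_rho_opn by (rule opn_nonneg[OF bnd_markov1[OF assms]])

definition delta0 :: "'a::group_add \<Rightarrow> complex" where
  "delta0 x = (if x = 0 then 1 else 0)"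

lemma delta0_l2: "in_l2 (delta0 :: 'a::group_add \<Rightarrow> complex) \<and> l2_norm (delta0 :: 'a \<Rightarrow> complex) \<le> 1"
proof (rule l2_from_fin)
  fix F :: "'a set" assume F: "finite F"
  have "L2_set (\<lambda>x. cmod (delta0 x)) F \<le> (\<Sum>x\<in>F. cmod (delta0 x))"
    by (rule L2_set_le_sum) simp
  also have "\<dots> = (\<Sum>x\<in>F. if x = 0 then 1 else 0)" by (rule sum.cong) (auto simp: delta0_def)
  also have "\<dots> \<le> 1" using F by (simp add: sum.delta)
  finally show "L2_set (\<lambda>x. cmod (delta0 x)) F \<le> 1" .
qed

lemma sum_delta_translate:
  fixes S :: "'a::group_add set"
  assumes "finite S"
  shows "(\<Sum>s\<in>S. f s * delta0 (- s + x)) = (if x \<in> S then f x else 0)"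
proof -
  have "(\<Sum>s\<in>S. f s * delta0 (- s + x)) = (\<Sum>s\<in>S. if s = x then f s else 0)"
  proof (rule sum.cong)
    fix s assume "s \<in> S"
    have "(- s + x = 0) = (s = x)"
      by (metis add.left_inverse add_minus_cancel)
    then show "f s * delta0 (- s + x) = (if s = x then f s else 0)" by (simp add: delta0_def)
  qed simp
  also have "\<dots> = (if x \<in> S then f x else 0)" using assms by (simp add: sum.delta')
  finally show ?thesis .
qed

lemma l2_indicator_ge:
  fixes L :: "'a set"
  assumes "finite L" "in_l2 h" "\<And>x. x \<in> L \<Longrightarrow> cmod (h x) = c"
  shows "sqrt (real (card L)) * \<bar>c\<bar> \<le> l2_norm h"
proof -
  have "L2_set (\<lambda>x. cmod (h x)) L = L2_set (\<lambda>x. c) L" by (rule L2_set_cong) (use assms in auto)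
  also have "\<dots> = sqrt (real (card L)) * \<bar>c\<bar>" by (rule L2_set_constant)
  finally show ?thesis using l2_fin_le[OF assms(2,1)] by simp
qed

lemma spec_rho_lower:
  fixes S :: "'a::group_add set"
  assumes "finite S" "S \<noteq> {}"
  shows "1 / sqrt (real (card S)) \<le> spec_rho S"
proof -
  define m where "m = real (card S)"
  have m0: "0 < m" using assms by (simp add: m_def card_gt_0_iff)
  have Md: "markov_op S delta0 x = (if x \<in> S then 1 / of_nat (card S) else 0)" for x
    unfolding markov_op_def using sum_delta_translate[OF assms(1), of "\<lambda>_. 1" x] by simp
  have b1: "bnd (markov_op S) 1" by (rule bnd_markov1[OF assms])
  have in2: "in_l2 (markov_op S delta0)" using bnd_D[OF b1] delta0_l2 by blast
  have "sqrt m * \<bar>1/m\<bar> \<le> l2_norm (markov_op S delta0)"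
    unfolding m_def by (rule l2_indicator_ge[OF assms(1) in2]) (simp add: Md norm_divide)
  also have "\<dots> \<le> spec_rho S" unfolding spec_rho_opn using opn_ge[OF b1] delta0_l2 by blast
  finally have "sqrt m * (1/m) \<le> spec_rho S" using m0 by simp
  moreover have "sqrt m * (1/m) = 1 / sqrt m"
  proof -
    have s0: "0 < sqrt m" using m0 by simp
    have "sqrt m * sqrt m = m" using m0 by simp
    then show ?thesis using s0 m0 by (metis divide_divide_eq_right nonzero_mult_div_cancel_left times_divide_eq_left mult.commute less_irrefl div_by_1 divide_self_if)
  qed
  ultimately show ?thesis by (simp add: m_def)
qed

lemma bnd_markov_pow:
  fixes T :: "'a::group_add set"
  assumes "finite T" "T \<noteq> {}"
  shows "bnd (markov_op T ^^ n) (spec_rho T ^ n)"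
proof (induction n)
  case 0
  then show ?case using bnd_id by (simp add: id_def)
next
  case (Suc n)
  have "bnd (markov_op T \<circ> (markov_op T ^^ n)) (spec_rho T * spec_rho T ^ n)"
    by (rule bnd_comp[OF bnd_markov[OF assms] Suc spec_rho_nonneg[OF assms]])
  then show ?case by (simp add: o_def)
qed

definition Lists :: "'a set \<Rightarrow> nat \<Rightarrow> 'a list set" where
  "Lists T n = {xs. set xs \<subseteq> T \<and> length xs = n}"

lemma markov_pow_formula:
  fixes T :: "'a::group_add set"
  assumes "finite T"
  shows "(markov_op T ^^ n) g x = 1 / of_nat (card T ^ n) * (\<Sum>xs\<in>Lists T n. g (- sum_list xs + x))"
proof (induction n arbitrary: x)
  case 0
  have "Lists T 0 = {[]}" by (auto simp: Lists_def)
  then show ?case by simp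
next
  case (Suc n)
  have inj: "inj_on (\<lambda>(xs, s). s # xs) (Lists T n \<times> T)" by (auto simp: inj_on_def)
  have LS: "Lists T (Suc n) = (\<lambda>(xs, s). s # xs) ` (Lists T n \<times> T)"
    unfolding Lists_def by (rule lists_length_Suc_eq)
  have fin: "finite (Lists T n)" unfolding Lists_def by (rule finite_lists_length_eq[OF assms])
  have "(\<Sum>xs\<in>Lists T (Suc n). g (- sum_list xs + x))
      = (\<Sum>p\<in>Lists T n \<times> T. g (- sum_list (snd p # fst p) + x))"
    unfolding LS by (subst sum.reindex[OF inj]) (simp add: case_prod_beta)
  also have "\<dots> = (\<Sum>(xs, s)\<in>Lists T n \<times> T. g (- sum_list xs + (- s + x)))"
    by (rule sum.cong) (auto, metis add.assoc minus_add)
  also have "\<dots> = (\<Sum>xs\<in>Lists T n. \<Sum>s\<in>T. g (- sum_list xs + (- s + x)))"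
    by (rule sum.cartesian_product[symmetric])
  also have "\<dots> = (\<Sum>s\<in>T. \<Sum>xs\<in>Lists T n. g (- sum_list xs + (- s + x)))"
    by (rule sum.swap)
  finally have E: "(\<Sum>xs\<in>Lists T (Suc n). g (- sum_list xs + x)) = (\<Sum>s\<in>T. \<Sum>xs\<in>Lists T n. g (- sum_list xs + (- s + x)))" .
  have "(markov_op T ^^ Suc n) g x = markov_op T ((markov_op T ^^ n) g) x" by simp
  also have "\<dots> = 1 / of_nat (card T) * (\<Sum>s\<in>T. 1 / of_nat (card T ^ n) * (\<Sum>xs\<in>Lists T n. g (- sum_list xs + (- s + x))))"
    unfolding markov_op_def Suc by simp
  also have "\<dots> = 1 / of_nat (card T ^ Suc n) * (\<Sum>xs\<in>Lists T (Suc n). g (- sum_list xs + x))"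
    unfolding E by (simp add: sum_distrib_left)
  finally show ?case .
qed

definition cnt :: "'a::group_add set \<Rightarrow> nat \<Rightarrow> 'a \<Rightarrow> nat" where
  "cnt T n v = card {xs \<in> Lists T n. sum_list xs = v}"

definition nu :: "'a::group_add set \<Rightarrow> nat \<Rightarrow> 'a \<Rightarrow> real" where
  "nu T n v = real (cnt T n v) / real (card T ^ n)"

definition Sp :: "'a::group_add set \<Rightarrow> nat \<Rightarrow> 'a set" where
  "Sp T n = sum_list ` Lists T n"

lemma Lists_finite: "finite T \<Longrightarrow> finite (Lists T n)"
  unfolding Lists_def by (rule finite_lists_length_eq)

lemma Lists_card: "finite T \<Longrightarrow> card (Lists T n) = card T ^ n"
  unfolding Lists_def by (rule card_lists_length_eq)

lemma Sp_finite: "finite T \<Longrightarrow> finite (Sp T n)"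
  unfolding Sp_def using Lists_finite by blast

lemma Sp_card: "finite T \<Longrightarrow> card (Sp T n) \<le> card T ^ n"
  unfolding Sp_def using Lists_card card_image_le Lists_finite by metis

lemma group_sum:
  fixes T :: "'a::group_add set" and h :: "'a \<Rightarrow> real"
  assumes "finite T"
  shows "(\<Sum>xs\<in>Lists T n. h (sum_list xs)) = (\<Sum>v\<in>Sp T n. real (cnt T n v) * h v)"
proof -
  have "(\<Sum>xs\<in>Lists T n. h (sum_list xs)) = (\<Sum>v\<in>Sp T n. \<Sum>xs\<in>{xs. xs \<in> Lists T n \<and> sum_list xs = v}. h (sum_list xs))"
    by (rule sum.group[symmetric]) (auto simp: Sp_def Lists_finite Sp_finite assms)
  also have "\<dots> = (\<Sum>v\<in>Sp T n. real (cnt T n v) * h v)"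
    by (rule sum.cong) (auto simp: cnt_def)
  finally show ?thesis .
qed

lemma nu_sum:
  fixes T :: "'a::group_add set"
  assumes "finite T" "T \<noteq> {}"
  shows "(\<Sum>v\<in>Sp T n. nu T n v) = 1"
proof -
  have m0: "0 < card T" using assms by (simp add: card_gt_0_iff)
  have "(\<Sum>v\<in>Sp T n. real (cnt T n v) * 1) = (\<Sum>xs\<in>Lists T n. 1)"
    using group_sum[OF assms(1), where h="\<lambda>_. 1" and n=n] by simp
  also have "\<dots> = real (card T ^ n)" using Lists_card[OF assms(1)] by simp
  finally show ?thesis using m0 unfolding nu_def by (simp add: sum_divide_distrib[symmetric])
qed

lemma cnt_le: "finite T \<Longrightarrow> cnt T n v \<le> card T ^ n"
  unfolding cnt_def using Lists_card Lists_finite card_mono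
  by (metis (no_types, lifting) mem_Collect_eq subsetI)

lemma nu_nonneg: "0 \<le> nu T n v"
  by (simp add: nu_def)

lemma nu_le1: "finite T \<Longrightarrow> T \<noteq> {} \<Longrightarrow> nu T n v \<le> 1"
  unfolding nu_def using cnt_le[of T n v] by (simp add: card_gt_0_iff divide_le_eq_1)

lemma nu_lower:
  fixes T :: "'a::group_add set"
  assumes "finite T" "T \<noteq> {}" "v \<in> Sp T n"
  shows "1 / real (card T ^ n) \<le> nu T n v"
proof -
  have "{xs \<in> Lists T n. sum_list xs = v} \<noteq> {}" using assms(3) by (auto simp: Sp_def)
  moreover have "finite {xs \<in> Lists T n. sum_list xs = v}" using Lists_finite[OF assms(1)] by simp
  ultimately have "1 \<le> cnt T n v" unfolding cnt_def by (simp add: Suc_leI card_gt_0_iff)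
  then show ?thesis unfolding nu_def by (simp add: divide_right_mono)
qed

lemma sum_list_rev_neg:
  fixes xs :: "'a::group_add list"
  shows "sum_list (rev (map uminus xs)) = - sum_list xs"
  by (induction xs) (auto simp: minus_add)

lemma cnt_neg_le:
  fixes T :: "'a::group_add set"
  assumes "finite T" "uminus ` T = T"
  shows "cnt T n (- v) \<le> cnt T n v"
proof -
  define phi :: "'a list \<Rightarrow> 'a list" where "phi = (\<lambda>xs. rev (map uminus xs))"
  have pp: "phi (phi xs) = xs" for xs by (simp add: phi_def rev_map)
  have TT: "- t \<in> T" if "t \<in> T" for t using assms(2) that by auto
  have sub: "{xs \<in> Lists T n. sum_list xs = - v} \<subseteq> phi ` {xs \<in> Lists T n. sum_list xs = v}"
  proof
    fix ys assume ys: "ys \<in> {xs \<in> Lists T n. sum_list xs = - v}"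
    have "phi ys \<in> {xs \<in> Lists T n. sum_list xs = v}"
      using ys TT by (auto simp: phi_def Lists_def sum_list_rev_neg)
    then show "ys \<in> phi ` {xs \<in> Lists T n. sum_list xs = v}" using pp by (metis image_eqI)
  qed
  have fin: "finite {xs \<in> Lists T n. sum_list xs = v}" using Lists_finite[OF assms(1)] by simp
  have "cnt T n (- v) \<le> card (phi ` {xs \<in> Lists T n. sum_list xs = v})"
    unfolding cnt_def by (rule card_mono[OF finite_imageI[OF fin] sub])
  also have "\<dots> \<le> cnt T n v" unfolding cnt_def by (rule card_image_le[OF fin])
  finally show ?thesis .
qed

lemma nu_neg:
  fixes T :: "'a::group_add set"
  assumes "finite T" "uminus ` T = T"
  shows "nu T n (- v) = nu T n v"
  using cnt_neg_le[OF assms, of n v] cnt_neg_le[OF assms, of n "- v"] by (simp add: nu_def)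

lemma Sp_iff_cnt:
  fixes T :: "'a::group_add set"
  assumes "finite T"
  shows "v \<in> Sp T n \<longleftrightarrow> 0 < cnt T n v"
proof -
  have fin: "finite {xs \<in> Lists T n. sum_list xs = v}" using Lists_finite[OF assms(1)] by simp
  show ?thesis unfolding Sp_def cnt_def using fin by (auto simp: card_gt_0_iff)
qed

lemma Sp_neg:
  fixes T :: "'a::group_add set"
  assumes "finite T" "uminus ` T = T" "v \<in> Sp T n"
  shows "- v \<in> Sp T n"
  using assms cnt_neg_le[OF assms(1,2), of n "- v"] Sp_iff_cnt[OF assms(1)] by force

definition Lk :: "'a::group_add set \<Rightarrow> nat \<Rightarrow> nat \<Rightarrow> 'a set" where
  "Lk T n k = {v \<in> Sp T n. 1 / 2 ^ (k + 1) < nu T n v \<and> nu T n v \<le> 1 / 2 ^ k}"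

lemma pow_bound: "real (m ^ n) < 2 ^ (n * m + 1)"
proof -
  have "m < 2 ^ m" by (rule less_exp)
  then have "m ^ n \<le> (2 ^ m) ^ n" by (simp add: power_mono)
  also have "\<dots> = 2 ^ (n * m)" by (simp add: power_mult[symmetric] mult.commute)
  also have "\<dots> < 2 ^ (n * m + 1)" by simp
  finally have "m ^ n < (2::nat) ^ (n * m + 1)" .
  then have "real (m ^ n) < real ((2::nat) ^ (n * m + 1))" by linarith
  then show ?thesis by simp
qed

lemma level_exists:
  fixes T :: "'a::group_add set"
  assumes "finite T" "T \<noteq> {}" "v \<in> Sp T n"
  shows "\<exists>k \<le> n * card T. v \<in> Lk T n k"
proof -
  define P where "P = (\<lambda>k::nat. 1 / 2 ^ (k + 1) < nu T n v)"
  have mpos: "0 < real (card T ^ n)" using assms by (simp add: card_gt_0_iff)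
  have "1 / 2 ^ (n * card T + 1) < 1 / real (card T ^ n)"
    using pow_bound[of "card T" n] mpos by (simp add: frac_less2)
  also have "\<dots> \<le> nu T n v" by (rule nu_lower[OF assms])
  finally have PK: "P (n * card T)" by (simp add: P_def)
  define k where "k = (LEAST k. P k)"
  have Pk: "P k" unfolding k_def by (rule LeastI[of P, OF PK])
  have kK: "k \<le> n * card T" unfolding k_def by (rule Least_le[of P, OF PK])
  have up: "nu T n v \<le> 1 / 2 ^ k"
  proof (cases k)
    case 0
    then show ?thesis using nu_le1[OF assms(1,2)] by simp
  next
    case (Suc j)
    have "\<not> P j" using not_less_Least[of j P] Suc k_def by simp
    then show ?thesis using Suc by (simp add: P_def)
  qed
  show ?thesis using Pk up kK assms(3) by (auto simp: Lk_def P_def)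
qed

lemma Lk_sub: "Lk T n k \<subseteq> Sp T n"
  by (auto simp: Lk_def)

lemma pigeon:
  fixes T :: "'a::group_add set"
  assumes "finite T" "T \<noteq> {}"
  shows "\<exists>k \<le> n * card T. 1 / real (n * card T + 1) \<le> real (card (Lk T n k)) / 2 ^ k"
proof (rule ccontr)
  define K where "K = n * card T"
  assume "\<not> ?thesis"
  then have small: "real (card (Lk T n k)) / 2 ^ k < 1 / real (K + 1)" if "k \<le> K" for k
    using that K_def not_le by fastforce
  have finS: "finite (Sp T n)" by (rule Sp_finite[OF assms(1)])
  have "1 = (\<Sum>v\<in>Sp T n. nu T n v)" using nu_sum[OF assms] by simp
  also have "\<dots> \<le> (\<Sum>v\<in>Sp T n. \<Sum>k\<in>{..K}. if v \<in> Lk T n k then 1 / 2 ^ k else 0)"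
  proof (rule sum_mono)
    fix v assume v: "v \<in> Sp T n"
    obtain k0 where k0: "k0 \<le> K" "v \<in> Lk T n k0" using level_exists[OF assms v] K_def by blast
    have "nu T n v \<le> (if v \<in> Lk T n k0 then 1 / 2 ^ k0 else 0)" using k0 by (simp add: Lk_def)
    also have "\<dots> \<le> (\<Sum>k\<in>{..K}. if v \<in> Lk T n k then 1 / 2 ^ k else 0)"
      by (rule member_le_sum[where f="\<lambda>k. if v \<in> Lk T n k then 1 / 2 ^ k else (0::real)"]) (use k0 in auto)
    finally show "nu T n v \<le> (\<Sum>k\<in>{..K}. if v \<in> Lk T n k then 1 / 2 ^ k else 0)" .
  qed
  also have "\<dots> = (\<Sum>k\<in>{..K}. \<Sum>v\<in>Sp T n. if v \<in> Lk T n k then 1 / 2 ^ k else 0)"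
    by (rule sum.swap)
  also have "\<dots> = (\<Sum>k\<in>{..K}. real (card (Lk T n k)) / 2 ^ k)"
  proof (rule sum.cong)
    fix k
    have "(\<Sum>v\<in>Sp T n. if v \<in> Lk T n k then 1 / 2 ^ k else (0::real)) = (\<Sum>v\<in>Lk T n k. 1 / 2 ^ k)"
      using finS Lk_sub[of T n k] by (simp add: sum.If_cases Int_absorb1)
    then show "(\<Sum>v\<in>Sp T n. if v \<in> Lk T n k then 1 / 2 ^ k else 0) = real (card (Lk T n k)) / 2 ^ k"
      by simp
  qed simp
  also have "\<dots> < (\<Sum>k\<in>{..K}. 1 / real (K + 1))"
    by (rule sum_strict_mono) (use small in auto)
  also have "\<dots> = 1" by simp
  finally show False by simp
qed

lemma Lk_sym:
  fixes T :: "'a::group_add set"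
  assumes "finite T" "uminus ` T = T"
  shows "uminus ` Lk T n k = Lk T n k"
proof -
  have neg: "- v \<in> Lk T n k" if "v \<in> Lk T n k" for v
    using that Sp_neg[OF assms] nu_neg[OF assms] by (auto simp: Lk_def)
  show ?thesis
  proof
    show "uminus ` Lk T n k \<subseteq> Lk T n k" using neg by auto
    show "Lk T n k \<subseteq> uminus ` Lk T n k"
    proof
      fix v assume "v \<in> Lk T n k"
      then have "- v \<in> Lk T n k" by (rule neg)
      then show "v \<in> uminus ` Lk T n k" by (metis image_eqI minus_minus)
    qed
  qed
qed

lemma An_cmod:
  fixes T :: "'a::group_add set" and f :: "'a \<Rightarrow> complex"
  assumes "finite T" "T \<noteq> {}"
  shows "cmod ((markov_op T ^^ n) (\<lambda>y. complex_of_real (cmod (f y))) x)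
         = (\<Sum>v\<in>Sp T n. nu T n v * cmod (f (- v + x)))"
proof -
  define m where "m = real (card T ^ n)"
  have m0: "0 < m" using assms by (simp add: m_def card_gt_0_iff)
  have "(markov_op T ^^ n) (\<lambda>y. complex_of_real (cmod (f y))) x
      = 1 / of_nat (card T ^ n) * (\<Sum>xs\<in>Lists T n. complex_of_real (cmod (f (- sum_list xs + x))))"
    by (rule markov_pow_formula[OF assms(1)])
  also have "\<dots> = complex_of_real (1 / m * (\<Sum>xs\<in>Lists T n. cmod (f (- sum_list xs + x))))"
    by (simp add: m_def)
  also have "(\<Sum>xs\<in>Lists T n. cmod (f (- sum_list xs + x))) = (\<Sum>v\<in>Sp T n. real (cnt T n v) * cmod (f (- v + x)))"
    by (rule group_sum[OF assms(1), where h="\<lambda>v. cmod (f (- v + x))"])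
  finally have E: "(markov_op T ^^ n) (\<lambda>y. complex_of_real (cmod (f y))) x
      = complex_of_real (\<Sum>v\<in>Sp T n. nu T n v * cmod (f (- v + x)))"
    by (simp add: sum_distrib_left nu_def m_def)
  have "0 \<le> (\<Sum>v\<in>Sp T n. nu T n v * cmod (f (- v + x)))"
    by (intro sum_nonneg mult_nonneg_nonneg nu_nonneg) simp
  then show ?thesis unfolding E norm_of_real by (rule abs_of_nonneg)
qed

lemma dom_L:
  fixes T :: "'a::group_add set" and f :: "'a \<Rightarrow> complex"
  assumes "finite T" "T \<noteq> {}" "L \<subseteq> Sp T n" "0 < t" "\<And>v. v \<in> L \<Longrightarrow> t < nu T n v"
  shows "(\<Sum>v\<in>L. cmod (f (- v + x))) \<le> 1 / t * cmod ((markov_op T ^^ n) (\<lambda>y. complex_of_real (cmod (f y))) x)"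
proof -
  have finS: "finite (Sp T n)" by (rule Sp_finite[OF assms(1)])
  have "t * (\<Sum>v\<in>L. cmod (f (- v + x))) = (\<Sum>v\<in>L. t * cmod (f (- v + x)))"
    by (simp add: sum_distrib_left)
  also have "\<dots> \<le> (\<Sum>v\<in>L. nu T n v * cmod (f (- v + x)))"
  proof (rule sum_mono)
    fix v assume "v \<in> L"
    then have "t \<le> nu T n v" using assms(5) by (simp add: less_imp_le)
    then show "t * cmod (f (- v + x)) \<le> nu T n v * cmod (f (- v + x))" by (rule mult_right_mono) simp
  qed
  also have "\<dots> \<le> (\<Sum>v\<in>Sp T n. nu T n v * cmod (f (- v + x)))"
    by (rule sum_mono2[OF finS assms(3)]) (simp add: nu_nonneg)
  also have "\<dots> = cmod ((markov_op T ^^ n) (\<lambda>y. complex_of_real (cmod (f y))) x)"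
    by (rule An_cmod[OF assms(1,2), symmetric])
  finally show ?thesis using assms(4) by (simp add: field_simps)
qed

lemma L_card_bound:
  fixes T :: "'a::group_add set"
  assumes "finite T" "T \<noteq> {}" "L \<subseteq> Sp T n" "0 < t" "\<And>v. v \<in> L \<Longrightarrow> t < nu T n v"
  shows "sqrt (real (card L)) \<le> spec_rho T ^ n / t"
proof -
  have finL: "finite L" using Sp_finite[OF assms(1)] assms(3) finite_subset by blast
  define H where "H = (\<lambda>x. \<Sum>v\<in>L. delta0 (- v + x))"
  have Hx: "H x = (if x \<in> L then 1 else 0)" for x
    unfolding H_def using sum_delta_translate[OF finL, of "\<lambda>_. 1" x] by simp
  define g where "g = (\<lambda>y::'a. complex_of_real (cmod (delta0 y)))"
  have bn: "bnd (markov_op T ^^ n) (spec_rho T ^ n)" by (rule bnd_markov_pow[OF assms(1,2)])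
  have d0: "in_l2 (delta0::'a \<Rightarrow> complex)" "l2_norm (delta0::'a \<Rightarrow> complex) \<le> 1" using delta0_l2 by auto
  have g0: "in_l2 g \<and> l2_norm g \<le> l2_norm (delta0::'a \<Rightarrow> complex)" unfolding g_def by (rule l2_cmod[OF d0(1)])
  have g: "in_l2 g" "l2_norm g \<le> 1" using g0 d0 by auto
  have Ag: "in_l2 ((markov_op T ^^ n) g)" "l2_norm ((markov_op T ^^ n) g) \<le> spec_rho T ^ n * l2_norm g"
    using bnd_D[OF bn g(1)] by auto
  have dom: "cmod (H x) \<le> 1 / t * cmod ((markov_op T ^^ n) g x)" for x
  proof -
    have "cmod (H x) \<le> (\<Sum>v\<in>L. cmod (delta0 (- v + x)))" unfolding H_def by (rule norm_sum)
    also have "\<dots> \<le> 1 / t * cmod ((markov_op T ^^ n) g x)"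
      unfolding g_def by (rule dom_L[OF assms])
    finally show ?thesis .
  qed
  have H: "in_l2 H \<and> l2_norm H \<le> 1 / t * l2_norm ((markov_op T ^^ n) g)"
    by (rule l2_dom[OF Ag(1)]) (use assms(4) dom in auto)
  have "sqrt (real (card L)) * \<bar>1\<bar> \<le> l2_norm H"
    by (rule l2_indicator_ge[OF finL]) (use H Hx in auto)
  also have "\<dots> \<le> 1 / t * l2_norm ((markov_op T ^^ n) g)" using H by simp
  also have "\<dots> \<le> 1 / t * (spec_rho T ^ n * l2_norm g)"
    using Ag(2) assms(4) by (simp add: divide_right_mono)
  also have "\<dots> \<le> 1 / t * (spec_rho T ^ n * 1)"
    using g(2) assms(4) spec_rho_nonneg[OF assms(1,2)]
    by (intro mult_left_mono) (auto intro: mult_left_mono)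
  finally show ?thesis by simp
qed

lemma Sprime_bound:
  fixes T :: "'a::group_add set"
  assumes "finite T" "T \<noteq> {}" "L \<subseteq> Sp T n" "0 < t" "\<And>v. v \<in> L \<Longrightarrow> t < nu T n v"
    and S1: "finite S1"
    and Sne: "L \<union> S1 \<noteq> {}"
  shows "spec_rho (L \<union> S1) \<le> (spec_rho T ^ n / t + real (card S1)) / real (card (L \<union> S1))"
proof -
  have finL: "finite L" using Sp_finite[OF assms(1)] assms(3) finite_subset by blast
  define S' where "S' = L \<union> S1"
  have finS': "finite S'" using finL S1 by (simp add: S'_def)
  define M where "M = real (card S')"
  have M0: "0 < M" using finS' Sne by (simp add: M_def S'_def card_gt_0_iff)
  define r where "r = spec_rho T"
  have r0: "0 \<le> r" using spec_rho_nonneg[OF assms(1,2)] by (simp add: r_def)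
  have bn: "bnd (markov_op T ^^ n) (r ^ n)" unfolding r_def by (rule bnd_markov_pow[OF assms(1,2)])
  have "bnd (markov_op S') ((r ^ n / t + real (card S1)) / M)"
    unfolding bnd_def
  proof (intro allI impI)
    fix f :: "'a \<Rightarrow> complex" assume f: "in_l2 f"
    define g where "g = (\<lambda>y. complex_of_real (cmod (f y)))"
    have g: "in_l2 g" "l2_norm g \<le> l2_norm f" using l2_cmod[OF f] unfolding g_def by auto
    have Ag: "in_l2 ((markov_op T ^^ n) g)" "l2_norm ((markov_op T ^^ n) g) \<le> r ^ n * l2_norm g"
      using bnd_D[OF bn g(1)] by auto
    define Q where "Q = (\<lambda>x. complex_of_real (\<Sum>v\<in>S1. cmod (f (- v + x))))"
    have Qx: "cmod (Q x) = (\<Sum>v\<in>S1. cmod (f (- v + x)))" for x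
      unfolding Q_def norm_of_real by (rule abs_of_nonneg) (simp add: sum_nonneg)
    have Q: "in_l2 Q \<and> l2_norm Q \<le> (\<Sum>v\<in>S1. 1 * l2_norm (\<lambda>x. f (- v + x)))"
      by (rule l2_family[OF S1]) (use l2_translate[OF f] Qx in auto)
    have Ql: "l2_norm Q \<le> real (card S1) * l2_norm f"
    proof -
      have "(\<Sum>v\<in>S1. 1 * l2_norm (\<lambda>x. f (- v + x))) \<le> (\<Sum>v\<in>S1. l2_norm f)"
        by (rule sum_mono) (use l2_translate[OF f] in auto)
      then show ?thesis using Q by simp
    qed
    define G where "G = (\<lambda>b. if b then (markov_op T ^^ n) g else Q)"
    define c where "c = (\<lambda>b. if b then 1 / (M * t) else 1 / M)"
    have fam: "in_l2 (markov_op S' f) \<and> l2_norm (markov_op S' f) \<le> (\<Sum>b\<in>UNIV. c b * l2_norm (G b))"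
    proof (rule l2_family)
      show "finite (UNIV :: bool set)" by simp
      show "in_l2 (G b)" for b using Ag Q by (simp add: G_def)
      show "0 \<le> c b" for b using M0 assms(4) by (simp add: c_def)
      fix x
      have "cmod (markov_op S' f x) = 1 / M * cmod (\<Sum>v\<in>S'. f (- v + x))"
        unfolding markov_op_def M_def by (simp add: norm_mult norm_divide)
      also have "\<dots> \<le> 1 / M * (\<Sum>v\<in>S'. cmod (f (- v + x)))"
        using M0 by (intro mult_left_mono norm_sum) auto
      finally have c1: "cmod (markov_op S' f x) \<le> 1 / M * (\<Sum>v\<in>S'. cmod (f (- v + x)))" .
      have "(\<Sum>v\<in>S'. cmod (f (- v + x))) \<le> (\<Sum>v\<in>L. cmod (f (- v + x))) + (\<Sum>v\<in>S1. cmod (f (- v + x)))"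
        unfolding S'_def using sum_Un[OF finL S1, of "\<lambda>v. cmod (f (- v + x))"]
        by (simp add: sum_nonneg)
      also have "\<dots> \<le> 1 / t * cmod ((markov_op T ^^ n) g x) + cmod (Q x)"
        unfolding Qx g_def using dom_L[OF assms(1-5)] by simp
      finally have c2: "(\<Sum>v\<in>S'. cmod (f (- v + x))) \<le> 1 / t * cmod ((markov_op T ^^ n) g x) + cmod (Q x)" .
      have "cmod (markov_op S' f x) \<le> 1 / M * (1 / t * cmod ((markov_op T ^^ n) g x) + cmod (Q x))"
        using c1 mult_left_mono[OF c2, of "1/M"] M0 by simp
      also have "\<dots> = (\<Sum>b\<in>UNIV. c b * cmod (G b x))"
        using M0 assms(4) by (simp add: UNIV_bool c_def G_def field_simps)
      finally show "cmod (markov_op S' f x) \<le> (\<Sum>b\<in>UNIV. c b * cmod (G b x))" .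
    qed
    show "in_l2 (markov_op S' f) \<and> l2_norm (markov_op S' f) \<le> (r ^ n / t + real (card S1)) / M * l2_norm f"
    proof (intro conjI)
      show "in_l2 (markov_op S' f)" using fam by simp
      have "l2_norm (markov_op S' f) \<le> 1 / (M * t) * l2_norm ((markov_op T ^^ n) g) + 1 / M * l2_norm Q"
        using fam by (simp add: UNIV_bool c_def G_def)
      also have "\<dots> \<le> 1 / (M * t) * (r ^ n * l2_norm f) + 1 / M * (real (card S1) * l2_norm f)"
      proof (intro add_mono mult_left_mono)
        show "l2_norm ((markov_op T ^^ n) g) \<le> r ^ n * l2_norm f"
          using Ag(2) g(2) r0 by (meson order_trans mult_left_mono zero_le_power)
      qed (use Ql M0 assms(4) in auto)
      also have "\<dots> = (r ^ n / t + real (card S1)) / M * l2_norm f"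
        using M0 assms(4) by (simp add: field_simps)
      finally show "l2_norm (markov_op S' f) \<le> (r ^ n / t + real (card S1)) / M * l2_norm f" .
    qed
  qed
  then have "opn (markov_op S') \<le> (r ^ n / t + real (card S1)) / M"
    by (rule bnd_opn_le) (use M0 assms(4) r0 in auto)
  then show ?thesis by (simp add: spec_rho_opn S'_def M_def r_def)
qed

lemma numeric:
  fixes P t l K1 s Mp x :: real
  assumes P0: "0 < P" and P1: "P \<le> 1" and t0: "0 < t" and l0: "0 < l" and K1: "1 \<le> K1" and s0: "0 \<le> s"
    and Ml: "l \<le> Mp"
    and h1: "1 / (2 * K1) \<le> t * l"
    and h2: "sqrt l \<le> P / t"
    and h3: "x \<le> (P / t + s) / Mp"
  shows "x \<le> P * (2 + 4 * s) * K1\<^sup>2"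
proof -
  have it: "1 / t \<le> 2 * K1 * l"
    using h1 t0 K1 by (simp add: field_simps)
  have Pt: "P / t \<le> 2 * K1 * l * P"
    using mult_right_mono[OF it, of P] P0 by (simp add: field_simps)
  have sl0: "0 < sqrt l" using l0 by simp
  have lsq: "l = sqrt l * sqrt l" using l0 by simp
  have A: "sqrt l \<le> 2 * K1 * l * P" using h2 Pt by linarith
  have eq: "sqrt l * (2 * K1 * sqrt l * P) = 2 * K1 * (sqrt l * sqrt l) * P" by (simp only: mult_ac)
  have "sqrt l * 1 \<le> sqrt l * (2 * K1 * sqrt l * P)" using A unfolding eq using lsq by simp
  then have X: "1 \<le> 2 * K1 * sqrt l * P" using sl0 by simp
  have "1 \<le> (2 * K1 * sqrt l * P)\<^sup>2" using X by (rule one_le_power)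
  also have "(2 * K1 * sqrt l * P)\<^sup>2 = 4 * K1\<^sup>2 * P\<^sup>2 * l"
    using l0 by (simp add: power_mult_distrib)
  finally have "1 \<le> 4 * K1\<^sup>2 * P\<^sup>2 * l" .
  then have il: "1 / l \<le> 4 * K1\<^sup>2 * P\<^sup>2" using l0 by (simp add: field_simps)
  have nn: "0 \<le> P / t + s" using P0 t0 s0 by simp
  have "x \<le> (P / t + s) / Mp" by (rule h3)
  also have "\<dots> \<le> (P / t + s) / l" using nn l0 Ml by (simp add: divide_left_mono)
  also have "\<dots> = P / t * (1 / l) + s * (1 / l)" using t0 l0 by (simp add: field_simps)
  also have "\<dots> \<le> 2 * K1 * P + s * (4 * K1\<^sup>2 * P\<^sup>2)"
  proof (rule add_mono)
    have "P / t * (1 / l) \<le> 2 * K1 * l * P * (1 / l)" by (rule mult_right_mono[OF Pt]) (use l0 in simp)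
    also have "\<dots> = 2 * K1 * P" using l0 by simp
    finally show "P / t * (1 / l) \<le> 2 * K1 * P" .
    show "s * (1 / l) \<le> s * (4 * K1\<^sup>2 * P\<^sup>2)" using il s0 by (rule mult_left_mono)
  qed
  also have "\<dots> \<le> 2 * K1\<^sup>2 * P + s * (4 * K1\<^sup>2 * P)"
  proof (rule add_mono)
    have "K1 \<le> K1\<^sup>2" using K1 by (simp add: power2_eq_square)
    then show "2 * K1 * P \<le> 2 * K1\<^sup>2 * P" using P0 by simp
    have "P\<^sup>2 \<le> P" using P0 P1 by (simp add: power2_eq_square mult_left_le)
    then show "s * (4 * K1\<^sup>2 * P\<^sup>2) \<le> s * (4 * K1\<^sup>2 * P)" using s0 K1
      by (intro mult_left_mono) auto
  qed
  also have "\<dots> = P * (2 + 4 * s) * K1\<^sup>2" by (simp add: algebra_simps)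
  finally show ?thesis .
qed

lemma construct:
  fixes T S1 :: "'a::group_add set"
  assumes T: "finite T" "uminus ` T = T" "2 \<le> card T"
    and S1: "finite S1" "uminus ` S1 = S1" "2 \<le> card S1"
    and n1: "1 \<le> n"
  shows "\<exists>S'. finite_symmetric S' \<and> S1 \<subseteq> S' \<and> 2 \<le> card S'
     \<and> real (card S') \<le> (real (card S1) + 1) * real (card T) ^ n
     \<and> spec_rho S' \<le> spec_rho T ^ n * ((2 + 4 * real (card S1)) * 4 * (real (card T))^2) * real n ^ 2"
proof -
  have Tne: "T \<noteq> {}" using T(3) by auto
  define m where "m = card T"
  define s where "s = real (card S1)"
  define K where "K = n * m"
  obtain k where kK: "k \<le> K" and pk: "1 / real (K + 1) \<le> real (card (Lk T n k)) / 2 ^ k"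
    using pigeon[OF T(1) Tne, of n] unfolding K_def m_def by blast
  define L where "L = Lk T n k"
  define t :: real where "t = 1 / 2 ^ (k + 1)"
  have t0: "0 < t" by (simp add: t_def)
  have tl: "1 / (2 * real (K + 1)) \<le> t * real (card L)"
    using pk by (simp add: t_def L_def field_simps)
  have l0: "0 < real (card L)"
  proof -
    have "0 < 1 / (2 * real (K + 1))" by simp
    then have "0 < t * real (card L)" using tl by linarith
    then show ?thesis using t0 by (simp add: zero_less_mult_iff)
  qed
  have LSp: "L \<subseteq> Sp T n" by (simp add: L_def Lk_sub)
  have finL: "finite L" using Sp_finite[OF T(1)] LSp finite_subset by blast
  have Lnu: "t < nu T n v" if "v \<in> L" for v using that by (simp add: L_def Lk_def t_def)
  have Lcard: "card L \<le> m ^ n"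
    unfolding m_def using card_mono[OF Sp_finite[OF T(1)] LSp] Sp_card[OF T(1), of n] by (meson order_trans)
  have sqL: "sqrt (real (card L)) \<le> spec_rho T ^ n / t"
    by (rule L_card_bound[OF T(1) Tne LSp t0 Lnu])
  define S' where "S' = L \<union> S1"
  have finS': "finite S'" using finL S1(1) by (simp add: S'_def)
  have symS': "uminus ` S' = S'" using Lk_sym[OF T(1,2)] S1(2) by (simp add: S'_def L_def image_Un)
  have S1S': "S1 \<subseteq> S'" by (simp add: S'_def)
  have cS1: "card S1 \<le> card S'" by (rule card_mono[OF finS' S1S'])
  have cL: "card L \<le> card S'" by (rule card_mono[OF finS']) (simp add: S'_def)
  have cS'up: "card S' \<le> card L + card S1" unfolding S'_def by (rule card_Un_le)
  have Sne: "L \<union> S1 \<noteq> {}" using S1(3) by auto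
  have rb: "spec_rho S' \<le> (spec_rho T ^ n / t + s) / real (card S')"
    unfolding S'_def s_def by (rule Sprime_bound[OF T(1) Tne LSp t0 Lnu S1(1) Sne])
  have rho0: "0 < spec_rho T"
    using spec_rho_lower[OF T(1) Tne] Tne T(1) by (smt (verit) card_gt_0_iff divide_pos_pos of_nat_0_less_iff real_sqrt_gt_0_iff)
  have rho1: "spec_rho T \<le> 1" by (rule spec_rho_le1[OF T(1) Tne])
  have num: "spec_rho S' \<le> spec_rho T ^ n * (2 + 4 * s) * (real (K + 1))\<^sup>2"
  proof (rule numeric[OF _ _ t0 l0 _ _ _ tl sqL rb])
    show "0 < spec_rho T ^ n" using rho0 by simp
    show "spec_rho T ^ n \<le> 1" using rho0 rho1 by (simp add: power_le_one)
    show "1 \<le> real (K + 1)" by simp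
    show "0 \<le> s" by (simp add: s_def)
    show "real (card L) \<le> real (card S')" using cL by simp
  qed
  have m1: "1 \<le> m" using T(3) m_def by simp
  have K1: "real (K + 1) \<le> 2 * real n * real m"
  proof -
    have "1 \<le> n * m" using n1 m1 by (simp add: Suc_le_eq)
    then have "K + 1 \<le> 2 * n * m" by (simp add: K_def)
    then show ?thesis by (metis of_nat_le_iff of_nat_mult of_nat_numeral)
  qed
  have K1sq: "(real (K + 1))\<^sup>2 \<le> 4 * real m ^ 2 * real n ^ 2"
  proof -
    have "(real (K + 1))\<^sup>2 \<le> (2 * real n * real m)\<^sup>2" by (rule power_mono[OF K1]) simp
    then show ?thesis by (simp add: power_mult_distrib mult_ac)
  qed
  have nn: "0 \<le> spec_rho T ^ n * (2 + 4 * s)" using rho0 by (simp add: s_def)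
  have "spec_rho T ^ n * (2 + 4 * s) * (real (K + 1))\<^sup>2 \<le> spec_rho T ^ n * (2 + 4 * s) * (4 * real m ^ 2 * real n ^ 2)"
    by (rule mult_left_mono[OF K1sq nn])
  with num have "spec_rho S' \<le> spec_rho T ^ n * (2 + 4 * s) * (4 * real m ^ 2 * real n ^ 2)"
    by (rule order_trans)
  then have r': "spec_rho S' \<le> spec_rho T ^ n * ((2 + 4 * s) * 4 * (real m)^2) * real n ^ 2"
    by (simp add: algebra_simps)
  have "real (card S') \<le> real (card L) + s" using cS'up by (simp add: s_def)
  also have "\<dots> \<le> real m ^ n + s" using Lcard by (metis add_right_mono of_nat_le_iff of_nat_power)
  also have "\<dots> \<le> (s + 1) * real m ^ n"
  proof -
    have "1 \<le> real m ^ n" using m1 by simp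
    then have "s \<le> s * real m ^ n" by (simp add: s_def mult_le_cancel_left1)
    then show ?thesis by (simp add: algebra_simps)
  qed
  finally have cS'b: "real (card S') \<le> (s + 1) * real m ^ n" .
  show ?thesis
    using finS' symS' S1S' cS1 S1(3) cS'b r' unfolding finite_symmetric_def s_def m_def
    by (intro exI[of _ S']) auto
qed

lemma f_bounds:
  fixes S :: "'a::group_add set"
  assumes "finite S" "uminus ` S = S" "2 \<le> card S"
  shows "- 1/2 \<le> rho_exponent_fun S" "rho_exponent_fun S \<le> 0" "0 < spec_rho S"
proof -
  have ne: "S \<noteq> {}" using assms(3) by auto
  define m where "m = real (card S)"
  have m2: "2 \<le> m" using assms(3) by (simp add: m_def)
  have lm: "0 < ln m" using m2 by simp
  have low: "1 / sqrt m \<le> spec_rho S" unfolding m_def by (rule spec_rho_lower[OF assms(1) ne])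
  have sp: "0 < 1 / sqrt m" using m2 by simp
  show r0: "0 < spec_rho S" using low sp by linarith
  have "ln (1 / sqrt m) \<le> ln (spec_rho S)" using low sp r0 by (simp only: ln_le_cancel_iff)
  moreover have "ln (1 / sqrt m) = - (1/2) * ln m" using m2 by (simp add: ln_div ln_sqrt)
  ultimately have "- (1/2) * ln m \<le> ln (spec_rho S)" by simp
  then have "- (1/2) \<le> ln (spec_rho S) / ln m" using lm by (simp add: le_divide_eq)
  then show "- 1/2 \<le> rho_exponent_fun S" by (simp add: rho_exponent_fun_def m_def)
  have "ln (spec_rho S) \<le> 0" using spec_rho_le1[OF assms(1) ne] r0 by simp
  then show "rho_exponent_fun S \<le> 0" using lm unfolding rho_exponent_fun_def m_def[symmetric]
    by (simp add: divide_nonpos_pos)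
qed

lemma approx:
  fixes S0 T :: "'a::group_add set" and x :: 'a
  assumes x: "x \<noteq> 0"
    and S0: "finite_symmetric S0"
    and T: "finite_symmetric T" "2 \<le> card T"
    and e: "0 < e"
  shows "\<exists>S'. finite_symmetric S' \<and> S0 \<subseteq> S' \<and> rho_exponent_fun S' \<le> rho_exponent_fun T + e"
proof -
  define S1 where "S1 = S0 \<union> {0, x, - x}"
  have S1f: "finite S1" using S0 by (simp add: S1_def finite_symmetric_def)
  have S1s: "uminus ` S1 = S1" using S0 by (auto simp: S1_def finite_symmetric_def)
  have "card {0, x} \<le> card S1" by (rule card_mono[OF S1f]) (auto simp: S1_def)
  then have S1c: "2 \<le> card S1" using x by simp
  have S01: "S0 \<subseteq> S1" by (auto simp: S1_def)
  have Tf: "finite T" and Ts: "uminus ` T = T" using T by (auto simp: finite_symmetric_def)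
  have Tne: "T \<noteq> {}" using T(2) by auto
  show ?thesis
  proof (cases "spec_rho T < 1")
    case False
    then have "spec_rho T = 1" using spec_rho_le1[OF Tf Tne] by simp
    then have fT: "rho_exponent_fun T = 0" by (simp add: rho_exponent_fun_def)
    have "rho_exponent_fun S1 \<le> 0" by (rule f_bounds(2)[OF S1f S1s S1c])
    then show ?thesis using S1f S1s S01 fT e
      by (intro exI[of _ S1]) (auto simp: finite_symmetric_def)
  next
    case True
    define rho where "rho = spec_rho T"
    define m where "m = real (card T)"
    define s where "s = real (card S1)"
    define C where "C = (2 + 4 * s) * 4 * m ^ 2"
    define a where "a = ln rho"
    define b where "b = ln m"
    have rho0: "0 < rho" using f_bounds(3)[OF Tf Ts T(2)] by (simp add: rho_def)
    have a0: "a < 0" using True rho0 by (simp add: a_def rho_def)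
    have m2: "2 \<le> m" using T(2) by (simp add: m_def)
    have b0: "0 < b" using m2 by (simp add: b_def)
    have C1: "1 \<le> C"
    proof -
      have "1 \<le> 2 + 4 * s" by (simp add: s_def)
      moreover have "1 \<le> 4 * m ^ 2"
      proof -
        have "1 \<le> m ^ 2" using m2 by (intro one_le_power) simp
        then show ?thesis by simp
      qed
      ultimately have "1 * 1 \<le> (2 + 4 * s) * (4 * m ^ 2)" by (rule mult_mono) (auto simp: s_def)
      then show ?thesis unfolding C_def by (simp only: mult.assoc mult_1)
    qed
    have fT: "rho_exponent_fun T = a / b" by (simp add: rho_exponent_fun_def a_def b_def rho_def m_def)
    have lim: "(\<lambda>n::nat. (real n * a + ln C + 2 * ln (real n)) / (real n * b + ln (s + 1))) \<longlonglongrightarrow> a * inverse b"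
      using a0 b0 by real_asymp
    then have lim': "(\<lambda>n::nat. (real n * a + ln C + 2 * ln (real n)) / (real n * b + ln (s + 1))) \<longlonglongrightarrow> a / b"
      by (simp add: divide_inverse)
    have ev1: "eventually (\<lambda>n::nat. (real n * a + ln C + 2 * ln (real n)) / (real n * b + ln (s + 1)) < a / b + e) sequentially"
      using lim' e by (intro order_tendstoD) auto
    have ev2: "eventually (\<lambda>n::nat. real n * a + ln C + 2 * ln (real n) < 0) sequentially"
      using a0 by real_asymp
    have ev3: "eventually (\<lambda>n::nat. 1 \<le> n) sequentially" by (rule eventually_ge_at_top)
    obtain n where n1: "1 \<le> n"
      and nlt: "(real n * a + ln C + 2 * ln (real n)) / (real n * b + ln (s + 1)) < a / b + e"
      and nneg: "real n * a + ln C + 2 * ln (real n) < 0"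
      using eventually_happens'[OF sequentially_bot, OF eventually_conj[OF ev1 eventually_conj[OF ev2 ev3]]]
      by blast
    obtain S' where S': "finite_symmetric S'" "S1 \<subseteq> S'" "2 \<le> card S'"
      and cS': "real (card S') \<le> (s + 1) * m ^ n"
      and rS': "spec_rho S' \<le> rho ^ n * C * real n ^ 2"
      using construct[OF Tf Ts T(2) S1f S1s S1c n1] unfolding s_def m_def C_def rho_def by blast
    have S'f: "finite S'" and S's: "uminus ` S' = S'" using S'(1) by (auto simp: finite_symmetric_def)
    have r'0: "0 < spec_rho S'" by (rule f_bounds(3)[OF S'f S's S'(3)])
    define N where "N = real n * a + ln C + 2 * ln (real n)"
    define D where "D = real n * b + ln (s + 1)"
    have nR: "0 < real n" using n1 by simp
    have "ln (spec_rho S') \<le> ln (rho ^ n * C * real n ^ 2)" using rS' r'0 by simp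
    also have "\<dots> = N" using rho0 C1 nR by (simp add: N_def a_def ln_mult ln_realpow)
    finally have lnr: "ln (spec_rho S') \<le> N" .
    have cpos: "0 < ln (real (card S'))" using S'(3) by simp
    have "ln (real (card S')) \<le> ln ((s + 1) * m ^ n)" using cS' S'(3) by simp
    also have "\<dots> = D" using m2 by (simp add: D_def b_def ln_mult ln_realpow s_def add_pos_nonneg)
    finally have lnc: "ln (real (card S')) \<le> D" .
    have "rho_exponent_fun S' = ln (spec_rho S') / ln (real (card S'))" by (simp add: rho_exponent_fun_def)
    also have "\<dots> \<le> N / ln (real (card S'))" using lnr cpos by (simp add: divide_right_mono)
    also have "\<dots> \<le> N / D"
      using nneg lnc cpos by (intro divide_left_mono_neg) (auto simp: N_def)
    also have "\<dots> < a / b + e" using nlt by (simp add: N_def D_def)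
    finally show ?thesis using S'(1,2) S01 fT by (intro exI[of _ S']) auto
  qed
qed


theorem theorem7p6:
  assumes "\<exists>x::'a::group_add. x \<noteq> 0"
  shows "r_Gamma TYPE('a) =
    - (INF S \<in> {S::'a set. finite_symmetric S \<and> card S \<ge> 2}.
         ln (spec_rho S) / ln (real (card S)))"
proof -
  obtain x :: 'a where x: "x \<noteq> 0" using assms by blast
  define f :: "'a set \<Rightarrow> real" where "f = rho_exponent_fun"
  define Q where "Q = {S::'a set. finite_symmetric S \<and> card S \<ge> 2}"
  define FS where "FS = {S::'a set. finite_symmetric S}"
  define R where "R = (\<lambda>S0::'a set. {S'. finite_symmetric S' \<and> S0 \<subseteq> S'})"
  define J where "J = (\<lambda>S0. INF S' \<in> R S0. f S')"
  define I where "I = (INF S \<in> Q. f S)"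
  define Ss where "Ss = {0, x, - x}"
  have Ssf: "finite_symmetric Ss" by (auto simp: Ss_def finite_symmetric_def)
  have Ssc: "2 \<le> card Ss"
  proof -
    have "card {0, x} \<le> card Ss" by (rule card_mono) (auto simp: Ss_def)
    then show ?thesis using x by simp
  qed
  have QI: "S \<in> Q \<Longrightarrow> - 1/2 \<le> f S \<and> f S \<le> 0" for S
    using f_bounds(1,2)[of S] by (auto simp: Q_def finite_symmetric_def f_def)
  have Qne: "Q \<noteq> {}" using Ssf Ssc by (auto simp: Q_def)
  have Qbdd: "bdd_below (f ` Q)" using QI by (intro bdd_belowI[of _ "- 1/2"]) auto
  have Rbdd: "bdd_below (f ` R S0)" for S0
  proof (rule bdd_belowI[of _ "min (- 1/2) (f {})"])
    fix y assume "y \<in> f ` R S0"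
    then obtain S' where S': "finite_symmetric S'" "y = f S'" by (auto simp: R_def)
    consider "card S' = 0" | "card S' = 1" | "2 \<le> card S'" by linarith
    then show "min (- 1/2) (f {}) \<le> y"
    proof cases
      case 1
      then have "S' = {}" using S'(1) by (simp add: finite_symmetric_def)
      then show ?thesis using S' by simp
    next
      case 2
      then have "f S' = 0" by (simp add: f_def rho_exponent_fun_def)
      then show ?thesis using S' by simp
    next
      case 3
      then have "- 1/2 \<le> f S'" using QI[of S'] S'(1) by (simp add: Q_def)
      then show ?thesis using S' by simp
    qed
  qed
  have JI: "J S0 \<le> I" if S0: "S0 \<in> FS" for S0
    unfolding I_def
  proof (rule cINF_greatest[OF Qne])
    fix T assume T: "T \<in> Q"
    show "J S0 \<le> f T"
    proof (rule field_le_epsilon)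
      fix e :: real assume e: "0 < e"
      obtain S' where S': "finite_symmetric S'" "S0 \<subseteq> S'" "rho_exponent_fun S' \<le> rho_exponent_fun T + e"
        using approx[OF x _ _ _ e, of S0 T] S0 T by (auto simp: FS_def Q_def)
      have "J S0 \<le> f S'" unfolding J_def
        by (rule cINF_lower[OF Rbdd]) (use S' in \<open>auto simp: R_def\<close>)
      then show "J S0 \<le> f T + e" using S'(3) by (simp add: f_def)
    qed
  qed
  have IJ: "I \<le> J Ss" unfolding J_def
  proof (rule cINF_greatest)
    show "R Ss \<noteq> {}" using Ssf by (auto simp: R_def)
    fix S' assume S': "S' \<in> R Ss"
    have "card Ss \<le> card S'" using S' by (intro card_mono) (auto simp: R_def finite_symmetric_def)
    then have "S' \<in> Q" using S' Ssc by (auto simp: Q_def R_def)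
    then show "I \<le> f S'" unfolding I_def by (rule cINF_lower[OF Qbdd])
  qed
  have FSne: "FS \<noteq> {}" using Ssf by (auto simp: FS_def)
  have SUPeq: "(SUP S0 \<in> FS. J S0) = I"
  proof (rule antisym)
    show "(SUP S0 \<in> FS. J S0) \<le> I" by (rule cSUP_least[OF FSne JI])
    have "J Ss \<le> (SUP S0 \<in> FS. J S0)"
      by (rule cSUP_upper) (use Ssf JI in \<open>auto simp: FS_def intro!: bdd_aboveI[of _ I]\<close>)
    then show "I \<le> (SUP S0 \<in> FS. J S0)" using IJ by simp
  qed
  have "r_Gamma TYPE('a) = - (SUP S0 \<in> FS. J S0)"
    unfolding r_Gamma_def J_def R_def FS_def f_def by simp
  also have "\<dots> = - I" using SUPeq by simp
  also have "I = (INF S \<in> {S::'a set. finite_symmetric S \<and> card S \<ge> 2}. ln (spec_rho S) / ln (real (card S)))"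
    unfolding I_def Q_def f_def rho_exponent_fun_def by simp
  finally show ?thesis .
qed

end
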